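(* Let $B$ be the open unit disk, let $U=(u,v)\in C^1(\overline B;\mathbb R^2)$ be harmonic in $B$, and let $\Phi=U|_{\partial B}$. Let $\tilde u$ be a harmonic conjugate of $u$ and $f=u+i\tilde u$. If $\det DU>0$ on $\partial B$, then $\mathrm{WN}(f(\partial B))=\mathrm{WN}(\Phi(\partial B))$.
   Context: Points of $\mathbb R^2$ are identified with complex numbers, $z=re^{i\theta}$. For a closed curve parameterized by $\Phi\in C^1(\partial B;\mathbb R^2)$ with $\partial\Phi/\partial\theta\neq0$ for every $\theta\in[0,2\pi]$, its winding number is the integer $\mathrm{WN}=\frac1{2\pi}\int_{\partial B}\mathrm d\,\arg\left(\frac{\partial\Phi}{\partial\theta}\right)$; $\mathrm{WN}(f(\partial B))$ is defined analogously using $\theta\mapsto f(e^{i\theta})$. *)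

theory Defs
  imports "HOL-Complex_Analysis.Complex_Analysis"
begin

definition harmonic_on :: "complex set \<Rightarrow> (complex \<Rightarrow> real) \<Rightarrow> bool" where
  "harmonic_on S g \<longleftrightarrow> open S \<and>
     (\<exists>g' g''. (\<forall>z\<in>S. (g has_derivative blinfun_apply (g' z)) (at z)
                     \<and> (g' has_derivative blinfun_apply (g'' z)) (at z))
             \<and> continuous_on S g''
             \<and> (\<forall>z\<in>S. blinfun_apply (blinfun_apply (g'' z) 1) 1
                      + blinfun_apply (blinfun_apply (g'' z) \<i>) \<i> = 0))"

text \<open>Winding number of a closed curve parametrised by theta \<mapsto> c(e^{i theta}):
  (1/2pi) \<integral> d arg (\<partial>/\<partial>theta c(e^{i theta})), i.e. the winding number around 0
  of the (closed, continuous) tangent curve theta \<mapsto> \<partial>/\<partial>theta c(e^{i theta}), theta \<in> [0,2pi].\<close>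
definition WN :: "(complex \<Rightarrow> complex) \<Rightarrow> complex" where
  "WN c = winding_number
            (\<lambda>t. vector_derivative (\<lambda>\<theta>. c (cis \<theta>)) (at (2 * pi * t))) 0"

end

theory Submission imports Defs begin

lemma bdry_deriv:
  fixes f g :: "complex \<Rightarrow> complex"
  assumes df: "\<And>w. w \<in> ball 0 1 \<Longrightarrow> (f has_field_derivative g w) (at w)"
    and cf: "continuous_on (cball 0 1) f"
    and cg: "continuous_on (cball 0 1) g"
    and z: "z \<in> cball 0 1"
  shows "(f has_field_derivative g z) (at z within cball 0 1)"
  unfolding has_field_derivative_def has_derivative_within_alt
proof (intro conjI allI impI)
  show "bounded_linear ((*) (g z))" by (rule bounded_linear_mult_right)
  fix e :: real assume e: "e > 0"
  from cg z have "continuous (at z within cball 0 1) g"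
    using continuous_on_eq_continuous_within by blast
  then obtain d where d: "d > 0" and dg: "\<And>w. w \<in> cball 0 1 \<Longrightarrow> dist w z < d \<Longrightarrow> dist (g w) (g z) < e"
    using e unfolding continuous_within_eps_delta by blast
  define S where "S = ball 0 1 \<inter> ball z d"
  have cS: "convex S" unfolding S_def by (intro convex_Int convex_ball)
  define h where "h w = f w - g z * w" for w
  have dh: "(h has_field_derivative (g w - g z)) (at w within S)" if "w \<in> S" for w
  proof -
    have "w \<in> ball 0 1" using that S_def by auto
    from df[OF this] have "(h has_field_derivative (g w - g z)) (at w)"
      unfolding h_def by (auto intro!: derivative_eq_intros)
    then show ?thesis by (rule has_field_derivative_at_within)
  qed
  have nh: "norm (g w - g z) \<le> e" if "w \<in> S" for w
    using dg[of w] that unfolding S_def by (force simp: dist_norm norm_minus_commute)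
  show "\<exists>d>0. \<forall>y\<in>cball 0 1. norm (y - z) < d \<longrightarrow> norm (f y - f z - g z * (y - z)) \<le> e * norm (y - z)"
  proof (intro exI[of _ d] conjI ballI impI d)
    fix w assume w: "w \<in> cball 0 1" and wz: "norm (w - z) < d"
    have lim: "((\<lambda>r. h (of_real r * w) - h (of_real r * z)) \<longlongrightarrow> h w - h z) (at_left 1)"
    proof -
      have ch: "continuous_on (cball 0 1) h" unfolding h_def by (intro continuous_intros cf)
      have T: "((\<lambda>r. h (of_real r * x)) \<longlongrightarrow> h x) (at_left 1)" if x: "x \<in> cball 0 1" for x
      proof -
        have c1: "continuous (at x within cball 0 1) h" using ch x continuous_on_eq_continuous_within by blast
        have "eventually (\<lambda>r::real. r \<in> {0<..<1}) (at_left 1)"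
          by (rule eventually_at_left_real) simp
        then have c2: "eventually (\<lambda>r::real. of_real r * x \<in> cball 0 1) (at_left 1)"
        proof (rule eventually_mono)
          fix r :: real assume "r \<in> {0<..<1}"
          then show "of_real r * x \<in> cball 0 1" using x
            by (auto simp: norm_mult intro: mult_le_one)
        qed
        have "((\<lambda>r::real. of_real r * x) \<longlongrightarrow> of_real 1 * x) (at_left 1)"
          by (intro tendsto_intros)
        then have c3: "((\<lambda>r::real. of_real r * x) \<longlongrightarrow> x) (at_left 1)" by simp
        show ?thesis using continuous_within_tendsto_compose[OF c1 c2 c3] .
      qed
      show ?thesis using T[OF w] T[OF z] by (intro tendsto_intros)
    qed
    have ev: "eventually (\<lambda>r. norm (h (of_real r * w) - h (of_real r * z)) \<le> e * norm (w - z)) (at_left (1::real))"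
    proof -
      have "eventually (\<lambda>r::real. r \<in> {max 0 (1 - (d - norm (w - z))) <..<1}) (at_left 1)"
        using d wz by (intro eventually_at_left_real) auto
      then show ?thesis
      proof (rule eventually_mono)
        fix r :: real assume r: "r \<in> {max 0 (1 - (d - norm (w - z))) <..<1}"
        have inS: "of_real r * x \<in> S" if x: "x \<in> cball 0 1" "norm (x - z) \<le> norm (w - z)" for x
        proof -
          have r1: "r < 1" "1 - (d - norm (w - z)) < r" "0 < r" using r by auto
          have a1: "norm (of_real r * x) \<le> r" using r x by (auto simp: norm_mult intro: mult_left_le)
          have a2: "norm (of_real r * x - z) \<le> norm (of_real r * x - x) + norm (x - z)"
            by (metis diff_add_cancel norm_triangle_ineq add_diff_eq diff_diff_eq2)
          have a3: "norm (of_real r * x - x) = (1 - r) * norm x"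
          proof -
            have "of_real r * x - x = - (of_real (1 - r) * x)" by (simp add: algebra_simps)
            moreover have "norm (of_real (1 - r) :: complex) = 1 - r" using r by (simp only: norm_of_real) simp
            ultimately show ?thesis by (simp only: norm_minus_cancel norm_mult)
          qed
          have a4: "(1 - r) * norm x \<le> 1 - r" using r x by (auto intro: mult_left_le)
          have "norm (of_real r * x) < 1" "norm (of_real r * x - z) < d"
            using r1 a1 a2 a3 a4 x(2) by linarith+
          then show ?thesis unfolding S_def by (auto simp: dist_norm norm_minus_commute)
        qed
        have "norm (h (of_real r * w) - h (of_real r * z)) \<le> e * norm (of_real r * w - of_real r * z)"
          using field_differentiable_bound[OF cS dh nh inS[OF w order.refl] inS[OF z]] d z by auto
        also have "\<dots> \<le> e * norm (w - z)"
        proof -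
          have "norm (of_real r * w - of_real r * z) = r * norm (w - z)"
            using r by (simp add: norm_mult flip: right_diff_distrib)
          also have "\<dots> \<le> norm (w - z)" using r by (auto intro!: mult_left_le_one_le)
          finally show ?thesis using e by (simp add: mult_left_mono)
        qed
        finally show "norm (h (of_real r * w) - h (of_real r * z)) \<le> e * norm (w - z)" .
      qed
    qed
    have "norm (h w - h z) \<le> e * norm (w - z)"
      by (rule tendsto_upperbound[OF tendsto_norm[OF lim] ev]) simp
    then show "norm (f w - f z - g z * (w - z)) \<le> e * norm (w - z)"
      unfolding h_def by (simp add: algebra_simps)
  qed
qed

lemma alg:
  fixes t1 t2 p q r ss u :: real
  assumes "t1^2 + t2^2 = 1" "p * ss - r*q > 0" "0 \<le> u" "u \<le> 1"
    "t1*p + t2*q = 0" "(1 - u) * (t2 * p - t1 * q) + u * (t1 * r + t2 * ss) = 0"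
  shows False
proof -
  have id: "(t2*p - t1*q)*(t1*r + t2 * ss) = (p * ss - r*q)*(t1^2+t2^2) + (t1*p+t2*q)*(r*t2 - ss * t1)"
    by (simp add: algebra_simps power2_eq_square)
  have pos: "(t2*p - t1*q)*(t1*r + t2 * ss) > 0" using id assms by simp
  show False
  proof (cases "t2*p - t1*q > 0")
    case True
    then have "t1*r + t2 * ss > 0" using pos by (simp add: zero_less_mult_iff)
    then have "(1 - u) * (t2 * p - t1 * q) + u * (t1 * r + t2 * ss) > 0"
      using True assms(3,4)
      by (smt (verit) mult_nonneg_nonneg mult_pos_pos)
    then show False using assms(6) by simp
  next
    case False
    then have a: "t2*p - t1*q < 0" using pos by (cases "t2*p - t1*q = 0") auto
    then have "t1*r + t2 * ss < 0" using pos by (simp add: zero_less_mult_iff)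
    then have "(1 - u) * (t2 * p - t1 * q) + u * (t1 * r + t2 * ss) < 0"
      using a assms(3,4)
      by (smt (verit) mult_nonneg_nonpos mult_pos_neg)
    then show False using assms(6) by simp
  qed
qed

theorem theorem3p9:
  fixes U :: "complex \<Rightarrow> complex" and DU :: "complex \<Rightarrow> complex \<Rightarrow>\<^sub>L complex"
    and f :: "complex \<Rightarrow> complex"
  assumes C1: "\<forall>z\<in>cball 0 1. (U has_derivative blinfun_apply (DU z)) (at z within cball 0 1)"
    and C1_cont: "continuous_on (cball 0 1) DU"
    and harm_u: "harmonic_on (ball 0 1) (\<lambda>z. Re (U z))"
    and harm_v: "harmonic_on (ball 0 1) (\<lambda>z. Im (U z))"
    and f_hol: "f holomorphic_on ball 0 1"
    and f_re: "\<forall>z\<in>ball 0 1. Re (f z) = Re (U z)"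
    and f_ext: "continuous_on (cball 0 1) f"
    and det_pos: "\<forall>z\<in>sphere 0 1.
        Re (DU z 1) * Im (DU z \<i>) - Im (DU z 1) * Re (DU z \<i>) > 0"
  shows "(\<forall>\<theta>. (\<lambda>t. f (cis t)) differentiable (at \<theta>)
             \<and> vector_derivative (\<lambda>t. f (cis t)) (at \<theta>) \<noteq> 0)
         \<and> WN f = WN U"
proof -
  define g where "g z = complex_of_real (Re (DU z 1)) - \<i> * complex_of_real (Re (DU z \<i>))" for z
  have cDU: "continuous_on (cball 0 1) (\<lambda>z. DU z a)" for a
    by (intro continuous_intros C1_cont)
  have cg: "continuous_on (cball 0 1) g"
    unfolding g_def by (intro continuous_intros cDU)
  have dfin: "(f has_field_derivative g z) (at z)" if z: "z \<in> ball 0 1" for z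
  proof -
    have fd: "(f has_field_derivative deriv f z) (at z)"
      using holomorphic_derivI[OF f_hol open_ball z] .
    have "((\<lambda>x. Re (f x)) has_derivative (\<lambda>h. Re (deriv f z * h))) (at z)"
      using fd unfolding has_field_derivative_def by (intro derivative_intros)
    have Ud: "(U has_derivative blinfun_apply (DU z)) (at z)"
    proof -
      have "z \<in> cball 0 1" using z by auto
      with C1 have "(U has_derivative blinfun_apply (DU z)) (at z within cball 0 1)" by blast
      moreover have "at z within cball 0 1 = at z" using z by (intro at_within_interior) simp
      ultimately show ?thesis by simp
    qed
    have "((\<lambda>x. Re (U x)) has_derivative (\<lambda>h. Re (DU z h))) (at z)"
      using Ud by (intro derivative_intros)
    then have "((\<lambda>x. Re (f x)) has_derivative (\<lambda>h. Re (DU z h))) (at z)"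
      by (rule has_derivative_transform_within_open[OF _ open_ball z]) (use f_re in auto)
    with \<open>((\<lambda>x. Re (f x)) has_derivative (\<lambda>h. Re (deriv f z * h))) (at z)\<close>
    have eq: "(\<lambda>h. Re (deriv f z * h)) = (\<lambda>h. Re (DU z h))"
      by (rule has_derivative_unique)
    have "Re (deriv f z) = Re (DU z 1)" using fun_cong[OF eq, of 1] by simp
    moreover have "- Im (deriv f z) = Re (DU z \<i>)" using fun_cong[OF eq, of \<i>] by simp
    ultimately have "deriv f z = g z" unfolding g_def by (simp add: complex_eq_iff)
    then show ?thesis using fd by simp
  qed
  have dfb: "(f has_field_derivative g z) (at z within cball 0 1)" if "z \<in> cball 0 1" for z
    by (rule bdry_deriv[OF dfin f_ext cg that])
  have cis_in: "range cis \<subseteq> cball 0 1" by auto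
  have vdf: "((\<lambda>t. f (cis t)) has_vector_derivative (g (cis \<theta>) * (\<i> * cis \<theta>))) (at \<theta>)" for \<theta>
  proof -
    have c: "(cis has_derivative (\<lambda>t. t *\<^sub>R (\<i> * cis \<theta>))) (at \<theta>)"
      using has_derivative_cis[OF has_derivative_ident, of \<theta> UNIV] by simp
    have "(f has_derivative (*) (g (cis \<theta>))) (at (cis \<theta>) within range cis)"
      using dfb[of "cis \<theta>"] cis_in unfolding has_field_derivative_def
      by (auto intro: has_derivative_subset)
    from diff_chain_within[OF c this]
    have "((f \<circ> cis) has_derivative ((*) (g (cis \<theta>)) \<circ> (\<lambda>t. t *\<^sub>R (\<i> * cis \<theta>)))) (at \<theta>)"
      by simp
    moreover have "((*) (g (cis \<theta>)) \<circ> (\<lambda>t. t *\<^sub>R (\<i> * cis \<theta>))) = (\<lambda>t. t *\<^sub>R (g (cis \<theta>) * (\<i> * cis \<theta>)))"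
      by (auto simp: fun_eq_iff scaleR_conv_of_real ac_simps)
    ultimately show ?thesis unfolding has_vector_derivative_def by (simp add: o_def)
  qed
  have vdU: "((\<lambda>t. U (cis t)) has_vector_derivative (DU (cis \<theta>) (\<i> * cis \<theta>))) (at \<theta>)" for \<theta>
  proof -
    have c: "(cis has_derivative (\<lambda>t. t *\<^sub>R (\<i> * cis \<theta>))) (at \<theta>)"
      using has_derivative_cis[OF has_derivative_ident, of \<theta> UNIV] by simp
    have "(U has_derivative blinfun_apply (DU (cis \<theta>))) (at (cis \<theta>) within range cis)"
      using C1 cis_in by (auto intro: has_derivative_subset)
    from diff_chain_within[OF c this]
    have "((U \<circ> cis) has_derivative (blinfun_apply (DU (cis \<theta>)) \<circ> (\<lambda>t. t *\<^sub>R (\<i> * cis \<theta>)))) (at \<theta>)"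
      by simp
    moreover have "(blinfun_apply (DU (cis \<theta>)) \<circ> (\<lambda>t. t *\<^sub>R (\<i> * cis \<theta>))) = (\<lambda>t. t *\<^sub>R (DU (cis \<theta>) (\<i> * cis \<theta>)))"
      by (auto simp: fun_eq_iff blinfun.scaleR_right)
    ultimately show ?thesis unfolding has_vector_derivative_def by (simp add: o_def)
  qed
  have gnz: "g z \<noteq> 0" if "z \<in> sphere 0 1" for z
  proof
    assume "g z = 0"
    then have "Re (DU z 1) = 0" "Re (DU z \<i>) = 0" unfolding g_def by (auto simp: complex_eq_iff)
    moreover have "Re (DU z 1) * Im (DU z \<i>) - Im (DU z 1) * Re (DU z \<i>) > 0"
      using det_pos that by blast
    ultimately show False by simp
  qed
  have part1: "\<forall>\<theta>. (\<lambda>t. f (cis t)) differentiable (at \<theta>)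
             \<and> vector_derivative (\<lambda>t. f (cis t)) (at \<theta>) \<noteq> 0"
  proof
    fix \<theta>
    show "(\<lambda>t. f (cis t)) differentiable (at \<theta>)
             \<and> vector_derivative (\<lambda>t. f (cis t)) (at \<theta>) \<noteq> 0"
      using vdf[of \<theta>] vector_derivative_at[OF vdf[of \<theta>]] gnz[of "cis \<theta>"]
      by (auto simp: has_vector_derivative_def differentiable_def)
  qed
  define A where "A t = g (cis (2*pi*t)) * (\<i> * cis (2*pi*t))" for t
  define B where "B t = DU (cis (2*pi*t)) (\<i> * cis (2*pi*t))" for t
  have WNf: "WN f = winding_number A 0"
    unfolding WN_def A_def using vector_derivative_at[OF vdf] by simp
  have WNU: "WN U = winding_number B 0"
    unfolding WN_def B_def using vector_derivative_at[OF vdU] by simp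
  have pA: "path A" unfolding path_def A_def
    by (intro continuous_intros continuous_on_compose2[OF cg]) auto
  have pB: "path B" unfolding path_def B_def
    by (intro continuous_intros continuous_on_compose2[OF C1_cont]) auto
  have lA: "pathfinish A = pathstart A" unfolding pathfinish_def pathstart_def A_def
    by (simp add: cis_multiple_2pi)
  have lB: "pathfinish B = pathstart B" unfolding pathfinish_def pathstart_def B_def
    by (simp add: cis_multiple_2pi)
  have seg: "closed_segment (A t) (B t) \<subseteq> -{0}" for t
  proof
    fix x assume x: "x \<in> closed_segment (A t) (B t)"
    define c where "c = cis (2*pi*t)"
    define \<tau> where "\<tau> = \<i> * c"
    have cs: "c \<in> sphere 0 1" unfolding c_def by simp
    have n1: "norm \<tau> = 1" using cs unfolding \<tau>_def by (simp add: norm_mult)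
    have nt: "Re \<tau> ^ 2 + Im \<tau> ^ 2 = 1"
      using n1 cmod_power2[of \<tau>] by simp
    have tdec: "\<tau> = Re \<tau> *\<^sub>R 1 + Im \<tau> *\<^sub>R \<i>" by (simp add: complex_eq_iff)
    have DUt: "DU c \<tau> = Re \<tau> *\<^sub>R DU c 1 + Im \<tau> *\<^sub>R DU c \<i>"
      by (subst tdec) (simp only: blinfun.add_right blinfun.scaleR_right)
    have At: "A t = g c * \<tau>" "B t = DU c \<tau>" unfolding A_def B_def c_def \<tau>_def by simp_all
    obtain u where u: "0 \<le> u" "u \<le> 1" "x = (1 - u) *\<^sub>R A t + u *\<^sub>R B t"
      using x unfolding in_segment by blast
    show "x \<in> -{0}"
    proof
      assume "x \<in> {0}"
      then have x0: "(1 - u) *\<^sub>R A t + u *\<^sub>R B t = 0" using u by simp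
      have aRe: "Re (A t) = Re \<tau> * Re (DU c 1) + Im \<tau> * Re (DU c \<i>)"
        unfolding At g_def by simp
      have aIm: "Im (A t) = Im \<tau> * Re (DU c 1) - Re \<tau> * Re (DU c \<i>)"
        unfolding At g_def by simp
      have bRe: "Re (B t) = Re \<tau> * Re (DU c 1) + Im \<tau> * Re (DU c \<i>)"
        unfolding At DUt by simp
      have bIm: "Im (B t) = Re \<tau> * Im (DU c 1) + Im \<tau> * Im (DU c \<i>)"
        unfolding At DUt by simp
      have "(1 - u) * Re (A t) + u * Re (B t) = 0"
        using arg_cong[OF x0, of Re] by simp
      then have re: "Re \<tau> * Re (DU c 1) + Im \<tau> * Re (DU c \<i>) = 0"
        unfolding aRe bRe by (simp add: algebra_simps)
      have "(1 - u) * Im (A t) + u * Im (B t) = 0"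
        using arg_cong[OF x0, of Im] by simp
      then have im: "(1-u)*(Im \<tau> * Re (DU c 1) - Re \<tau> * Re (DU c \<i>)) + u*(Re \<tau> * Im (DU c 1) + Im \<tau> * Im (DU c \<i>)) = 0"
        unfolding aIm bIm .
      have dp: "Re (DU c 1) * Im (DU c \<i>) - Im (DU c 1) * Re (DU c \<i>) > 0"
        using det_pos cs by blast
      show False
        by (rule alg[OF nt _ u(1,2) re im]) (use dp in simp)
    qed
  qed
  have "homotopic_loops (-{0}) A B"
    by (rule homotopic_loops_linear[OF pA pB lA lB seg])
  then have "winding_number A 0 = winding_number B 0"
    by (rule winding_number_homotopic_loops)
  with part1 WNf WNU show ?thesis by simp
qed

end
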